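(* Let $G$ be a connected graph (finite, simple, undirected) together with a partial proper $2$-coloring of its vertices, i.e.\ an assignment of one of two colors to some (possibly none, possibly all) of the vertices of $G$ such that no two adjacent colored vertices receive the same color. Then this partial $2$-coloring can be extended to a total proper $2$-coloring of $V(G)$ (an assignment of one of the two colors to every vertex, agreeing with the given colors on the precolored vertices, such that adjacent vertices receive distinct colors) if and only if all of the following conditions hold: (i) there is no even induced path of $G$ whose only colored vertices are its two endpoints and these endpoints are colored with distinct colors; (ii) there is no odd induced path of $G$ whose only colored vertices are its two endpoints and these endpoints are colored with the same color; (iii) there is no induced odd cycle of $G$ all of whose vertices are uncolored; (iv) there is no induced odd cycle of $G$ with exactly one colored vertex; (v) there is no induced odd cycle of $G$ with exactly two colored vertices, these two vertices being consecutive on the cycle.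
   Context: The length of a path or cycle is its number of edges; a path or cycle is odd or even according to the parity of its length. A path or cycle is induced if no edge of $G$ joins two non-consecutive vertices of it. *)

theory Defs
  imports Main
begin

definition simple_graph :: "'a set \<Rightarrow> ('a \<Rightarrow> 'a \<Rightarrow> bool) \<Rightarrow> bool" where
  "simple_graph V E \<longleftrightarrow> finite V \<and> (\<forall>u v. E u v \<longrightarrow> u \<in> V \<and> v \<in> V)
     \<and> (\<forall>u v. E u v \<longrightarrow> E v u) \<and> (\<forall>u. \<not> E u u)"

definition connected_graph :: "'a set \<Rightarrow> ('a \<Rightarrow> 'a \<Rightarrow> bool) \<Rightarrow> bool" where
  "connected_graph V E \<longleftrightarrow> (\<forall>u\<in>V. \<forall>v\<in>V. E\<^sup>*\<^sup>* u v)"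

text \<open>Partial 2-colouring: colours are the two values of bool; None = uncoloured.\<close>
definition proper_partial_2col :: "'a set \<Rightarrow> ('a \<Rightarrow> 'a \<Rightarrow> bool) \<Rightarrow> ('a \<Rightarrow> bool option) \<Rightarrow> bool" where
  "proper_partial_2col V E c \<longleftrightarrow>
     (\<forall>u v. E u v \<longrightarrow> c u \<noteq> None \<longrightarrow> c v \<noteq> None \<longrightarrow> c u \<noteq> c v)"

definition extends_to_proper_2col :: "'a set \<Rightarrow> ('a \<Rightarrow> 'a \<Rightarrow> bool) \<Rightarrow> ('a \<Rightarrow> bool option) \<Rightarrow> bool" where
  "extends_to_proper_2col V E c \<longleftrightarrow>
     (\<exists>f :: 'a \<Rightarrow> bool. (\<forall>v\<in>V. c v \<noteq> None \<longrightarrow> c v = Some (f v))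
        \<and> (\<forall>u v. E u v \<longrightarrow> f u \<noteq> f v))"

text \<open>Induced path given by its vertex list; its length (number of edges) is length xs - 1.\<close>
definition induced_path :: "'a set \<Rightarrow> ('a \<Rightarrow> 'a \<Rightarrow> bool) \<Rightarrow> 'a list \<Rightarrow> bool" where
  "induced_path V E xs \<longleftrightarrow> xs \<noteq> [] \<and> distinct xs \<and> set xs \<subseteq> V
     \<and> (\<forall>i. i + 1 < length xs \<longrightarrow> E (xs!i) (xs!(i+1)))
     \<and> (\<forall>i j. i < length xs \<longrightarrow> j < length xs \<longrightarrow> E (xs!i) (xs!j) \<longrightarrow> j = i + 1 \<or> i = j + 1)"

text \<open>Induced cycle given by its cyclic vertex list; its length is length xs.\<close>
definition induced_cycle :: "'a set \<Rightarrow> ('a \<Rightarrow> 'a \<Rightarrow> bool) \<Rightarrow> 'a list \<Rightarrow> bool" where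
  "induced_cycle V E xs \<longleftrightarrow> 3 \<le> length xs \<and> distinct xs \<and> set xs \<subseteq> V
     \<and> (\<forall>i < length xs. E (xs!i) (xs!((i+1) mod length xs)))
     \<and> (\<forall>i j. i < length xs \<longrightarrow> j < length xs \<longrightarrow> E (xs!i) (xs!j) \<longrightarrow>
            j = (i + 1) mod length xs \<or> i = (j + 1) mod length xs)"

definition colored_vertices :: "('a \<Rightarrow> bool option) \<Rightarrow> 'a list \<Rightarrow> 'a set" where
  "colored_vertices c xs = {v \<in> set xs. c v \<noteq> None}"

end

theory Submission
  imports Defs
begin


definition walkf :: "('a \<Rightarrow> 'a \<Rightarrow> bool) \<Rightarrow> (nat \<Rightarrow> 'a) \<Rightarrow> nat \<Rightarrow> bool" where
  "walkf E w m \<longleftrightarrow> (\<forall>i<m. E (w i) (w (Suc i)))"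

lemma walk_sub:
  assumes "walkf E w m" "j \<le> m"
  shows "walkf E (\<lambda>k. w (i + k)) (j - i)"
  using assms unfolding walkf_def by auto

lemma walk_skip:
  assumes "walkf E w m" "i < j" "j \<le> m" "w i = w j"
  shows "walkf E (\<lambda>k. if k \<le> i then w k else w (k + (j - i))) (m - (j - i))"
  unfolding walkf_def
proof (intro allI impI)
  fix k assume k: "k < m - (j - i)"
  show "E (if k \<le> i then w k else w (k + (j - i))) (if Suc k \<le> i then w (Suc k) else w (Suc k + (j - i)))"
  proof (cases "Suc k \<le> i")
    case True then show ?thesis using assms k unfolding walkf_def by auto
  next
    case False
    show ?thesis
    proof (cases "k = i")
      case True
      then have "E (w j) (w (Suc j))" using assms k unfolding walkf_def by auto
      then show ?thesis using True assms by (auto simp: add.commute)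
    next
      case False
      then have "k > i" using \<open>\<not> Suc k \<le> i\<close> by auto
      then show ?thesis using assms k unfolding walkf_def by auto
    qed
  qed
qed

lemma walk_shortcut:
  assumes "walkf E w m" "i < j" "j \<le> m" "E (w i) (w j)"
  shows "walkf E (\<lambda>k. if k \<le> i then w k else w (k + (j - i - 1))) (m - (j - i - 1))"
  unfolding walkf_def
proof (intro allI impI)
  fix k assume k: "k < m - (j - i - 1)"
  show "E (if k \<le> i then w k else w (k + (j - i - 1))) (if Suc k \<le> i then w (Suc k) else w (Suc k + (j - i - 1)))"
  proof (cases "Suc k \<le> i")
    case True then show ?thesis using assms k unfolding walkf_def by auto
  next
    case False
    show ?thesis
    proof (cases "k = i")
      case True
      then show ?thesis using True assms by (auto simp: add.commute)
    next
      case False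
      then have "k > i" using \<open>\<not> Suc k \<le> i\<close> by auto
      then show ?thesis using assms k unfolding walkf_def by auto
    qed
  qed
qed

lemma walk_loop:
  assumes "walkf E w m" "i < j" "j \<le> m" "E (w j) (w i)"
  shows "walkf E (\<lambda>k. if k \<le> j - i then w (i + k) else w i) (j - i + 1)"
  unfolding walkf_def
proof (intro allI impI)
  fix k assume k: "k < j - i + 1"
  show "E (if k \<le> j - i then w (i + k) else w i) (if Suc k \<le> j - i then w (i + Suc k) else w i)"
  proof (cases "Suc k \<le> j - i")
    case True then show ?thesis using assms k unfolding walkf_def by auto
  next
    case False
    then have "k = j - i" using k by auto
    then show ?thesis using assms by auto
  qed
qed

lemma walk_wrap:
  assumes "walkf E w m" "i \<le> j" "j \<le> m" "w m = w 0"
  shows "walkf E (\<lambda>k. if k \<le> m - j then w (j + k) else w (k - (m - j))) (m - j + i)"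
  unfolding walkf_def
proof (intro allI impI)
  fix k assume k: "k < m - j + i"
  show "E (if k \<le> m - j then w (j + k) else w (k - (m - j))) (if Suc k \<le> m - j then w (j + Suc k) else w (Suc k - (m - j)))"
  proof (cases "Suc k \<le> m - j")
    case True then show ?thesis using assms k unfolding walkf_def by auto
  next
    case False
    show ?thesis
    proof (cases "k = m - j")
      case True
      then have "E (w 0) (w 1)" using assms k unfolding walkf_def by auto
      then show ?thesis using True assms by auto
    next
      case False
      then have "k > m - j" using \<open>\<not> Suc k \<le> m - j\<close> by auto
      then have "E (w (k - (m - j))) (w (Suc (k - (m - j))))" using assms k unfolding walkf_def by auto
      moreover have "Suc k - (m - j) = Suc (k - (m - j))" using \<open>k > m - j\<close> by auto
      ultimately show ?thesis using \<open>k > m - j\<close> by auto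
    qed
  qed
qed

lemma walk_extend:
  assumes "walkf E w m" "E (w m) v"
  shows "walkf E (\<lambda>k. if k \<le> m then w k else v) (Suc m)"
  using assms unfolding walkf_def
  by (auto simp: less_Suc_eq)

lemma walk_join:
  assumes "walkf E p a" "walkf E q b" "p a = q b" "\<And>x y. E x y \<Longrightarrow> E y x"
  shows "walkf E (\<lambda>k. if k \<le> a then p k else q (a + b - k)) (a + b)"
  unfolding walkf_def
proof (intro allI impI)
  fix k assume k: "k < a + b"
  show "E (if k \<le> a then p k else q (a + b - k)) (if Suc k \<le> a then p (Suc k) else q (a + b - Suc k))"
  proof (cases "Suc k \<le> a")
    case True then show ?thesis using assms k unfolding walkf_def by auto
  next
    case False
    then have "E (q (a + b - Suc k)) (q (Suc (a + b - Suc k)))" using assms(2) k unfolding walkf_def by auto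
    moreover have "Suc (a + b - Suc k) = a + b - k" using k by auto
    ultimately have "E (q (a + b - k)) (q (a + b - Suc k))" using assms(4) by auto
    then show ?thesis using False assms(3) by (cases "k = a") auto
  qed
qed

lemma rtranclp_walk:
  assumes "E\<^sup>*\<^sup>* u v"
  shows "\<exists>w m. walkf E w m \<and> w 0 = u \<and> w m = v"
  using assms
proof (induction rule: rtranclp_induct)
  case base
  then show ?case by (rule exI[of _ "\<lambda>_. u"], rule exI[of _ 0]) (auto simp: walkf_def)
next
  case (step y z)
  then obtain w m where "walkf E w m" "w 0 = u" "w m = y" by blast
  then show ?case using walk_extend[of E w m z] step by (intro exI[of _ "\<lambda>k. if k \<le> m then w k else z"] exI[of _ "Suc m"]) auto
qed

definition badw :: "('a \<Rightarrow> 'a \<Rightarrow> bool) \<Rightarrow> ('a \<Rightarrow> bool option) \<Rightarrow> (nat \<Rightarrow> 'a) \<Rightarrow> nat \<Rightarrow> bool" where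
  "badw E c w m \<longleftrightarrow> walkf E w m \<and> ((w 0 = w m \<and> odd m) \<or>
     (c (w 0) \<noteq> None \<and> c (w m) \<noteq> None \<and> (odd m \<longleftrightarrow> c (w 0) = c (w m))))"

lemma bool3:
  fixes P Q R a0 ai am :: bool
  shows "(P \<longleftrightarrow> (Q \<noteq> R)) \<Longrightarrow> \<not> (Q \<longleftrightarrow> a0 = ai) \<Longrightarrow> (P \<longleftrightarrow> a0 = am) \<Longrightarrow> (R \<longleftrightarrow> ai = am)"
  by auto

lemma obstruction:
  assumes sg: "simple_graph V E" and pp: "proper_partial_2col V E c" and bad: "badw E c w0 m0"
  shows "(\<exists>xs. induced_path V E xs \<and> even (length xs - 1)
           \<and> colored_vertices c xs = {hd xs, last xs}
           \<and> c (hd xs) \<noteq> None \<and> c (last xs) \<noteq> None \<and> c (hd xs) \<noteq> c (last xs))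
  \<or> (\<exists>xs. induced_path V E xs \<and> odd (length xs - 1)
           \<and> colored_vertices c xs = {hd xs, last xs}
           \<and> c (hd xs) \<noteq> None \<and> c (last xs) \<noteq> None \<and> c (hd xs) = c (last xs))
  \<or> (\<exists>xs. induced_cycle V E xs \<and> odd (length xs) \<and> colored_vertices c xs = {})
  \<or> (\<exists>xs. induced_cycle V E xs \<and> odd (length xs) \<and> card (colored_vertices c xs) = 1)
  \<or> (\<exists>xs i. induced_cycle V E xs \<and> odd (length xs) \<and> i < length xs
           \<and> colored_vertices c xs = {xs!i, xs!((i+1) mod length xs)})"
proof -
  have sym: "\<And>x y. E x y \<Longrightarrow> E y x" and irr: "\<And>x. \<not> E x x"
    and inV: "\<And>x y. E x y \<Longrightarrow> x \<in> V \<and> y \<in> V"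
    using sg unfolding simple_graph_def by blast+
  have prp: "\<And>x y. E x y \<Longrightarrow> c x \<noteq> None \<Longrightarrow> c y \<noteq> None \<Longrightarrow> c x \<noteq> c y"
    using pp unfolding proper_partial_2col_def by blast
  define mu where "mu = (\<lambda>(w::nat \<Rightarrow> 'a, m::nat). 2 * m + (if w 0 = w m \<and> odd m then 0 else 1::nat))"
  obtain p where p: "(case p of (w, m) \<Rightarrow> badw E c w m)"
    "\<forall>q. (case q of (w, m) \<Rightarrow> badw E c w m) \<longrightarrow> mu p \<le> mu q"
    using ex_has_least_nat[of "\<lambda>(w, m). badw E c w m" "(w0, m0)" mu] bad by auto
  obtain w m where pwm: "p = (w, m)" by (cases p)
  have bw: "badw E c w m" using p pwm by auto
  have wk: "walkf E w m" using bw unfolding badw_def by auto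
  have minim: "\<And>w' m'. badw E c w' m' \<Longrightarrow> mu (w, m) \<le> mu (w', m')"
    using p pwm by auto
  have edge: "\<And>i. i < m \<Longrightarrow> E (w i) (w (Suc i))" using wk unfolding walkf_def by auto
  show ?thesis
  proof (cases "w 0 = w m \<and> odd m")
    case True
    then have muw: "mu (w, m) = 2 * m" unfolding mu_def by auto
    have short: "\<And>w' m'. badw E c w' m' \<Longrightarrow> m' < m \<Longrightarrow> False"
    proof -
      fix w' m' assume "badw E c w' m'" "m' < m"
      then have "mu (w, m) \<le> mu (w', m')" using minim by blast
      moreover have "mu (w', m') \<le> 2 * m' + 1" unfolding mu_def by auto
      ultimately show False using muw \<open>m' < m\<close> by auto
    qed
    have "m \<noteq> 1"
    proof
      assume "m = 1"
      then have "E (w 0) (w 1)" using edge by auto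
      then show False using True irr \<open>m = 1\<close> by auto
    qed
    have "odd m" using True by auto
    then obtain k where "m = 2 * k + 1" by (rule oddE)
    then have m3: "m \<ge> 3" using \<open>m \<noteq> 1\<close> by arith
    have dist: "\<And>i j. i < j \<Longrightarrow> j < m \<Longrightarrow> w i \<noteq> w j"
    proof
      fix i j assume ij: "i < j" "j < m" "w i = w j"
      have w1: "walkf E (\<lambda>k. w (i + k)) (j - i)" using walk_sub[OF wk, of j i] ij by auto
      have w2: "walkf E (\<lambda>k. if k \<le> i then w k else w (k + (j - i))) (m - (j - i))"
        using walk_skip[OF wk, of i j] ij by auto
      show False
      proof (cases "odd (j - i)")
        case True
        then have "badw E c (\<lambda>k. w (i + k)) (j - i)" using w1 ij unfolding badw_def by auto
        from this show False by (rule short) (use ij in arith)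
      next
        case False
        then have "odd (m - (j - i))" using \<open>odd m\<close> ij by auto
        moreover have "m - (j - i) > i" using ij by auto
        ultimately have "badw E c (\<lambda>k. if k \<le> i then w k else w (k + (j - i))) (m - (j - i))"
          using w2 ij True unfolding badw_def by auto
        from this show False by (rule short) (use ij in arith)
      qed
    qed
    have col: "\<And>i j. i < j \<Longrightarrow> j < m \<Longrightarrow> c (w i) \<noteq> None \<Longrightarrow> c (w j) \<noteq> None \<Longrightarrow> False"
    proof -
      fix i j assume ij: "i < j" "j < m" "c (w i) \<noteq> None" "c (w j) \<noteq> None"
      have w1: "walkf E (\<lambda>k. w (i + k)) (j - i)" using walk_sub[OF wk, of j i] ij by auto
      have w2: "walkf E (\<lambda>k. if k \<le> m - j then w (j + k) else w (k - (m - j))) (m - j + i)"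
        using walk_wrap[OF wk, of i j] ij True by auto
      have e2: "(\<lambda>k. if k \<le> m - j then w (j + k) else w (k - (m - j))) (m - j + i) = w i"
        using ij True by (cases "i = 0") auto
      have par: "odd (m - j + i) \<longleftrightarrow> \<not> odd (j - i)" using ij \<open>odd m\<close> by auto
      show False
      proof (cases "odd (j - i) \<longleftrightarrow> c (w i) = c (w j)")
        case True
        then have "badw E c (\<lambda>k. w (i + k)) (j - i)" using w1 ij unfolding badw_def by auto
        from this show False by (rule short) (use ij in arith)
      next
        case False
        then have "badw E c (\<lambda>k. if k \<le> m - j then w (j + k) else w (k - (m - j))) (m - j + i)"
          using w2 ij e2 par unfolding badw_def by auto
        from this show False by (rule short) (use ij in arith)
      qed
    qed
    have chord: "\<And>i j. i < j \<Longrightarrow> j < m \<Longrightarrow> E (w i) (w j) \<Longrightarrow> j = i + 1 \<or> (i = 0 \<and> j = m - 1)"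
    proof (rule ccontr)
      fix i j assume ij: "i < j" "j < m" "E (w i) (w j)" "\<not> (j = i + 1 \<or> (i = 0 \<and> j = m - 1))"
      have w1: "walkf E (\<lambda>k. if k \<le> j - i then w (i + k) else w i) (j - i + 1)"
        using walk_loop[OF wk, of i j] ij sym by auto
      have w2: "walkf E (\<lambda>k. if k \<le> i then w k else w (k + (j - i - 1))) (m - (j - i - 1))"
        using walk_shortcut[OF wk, of i j] ij by auto
      show False
      proof (cases "odd (j - i + 1)")
        case True
        then have "badw E c (\<lambda>k. if k \<le> j - i then w (i + k) else w i) (j - i + 1)"
          using w1 unfolding badw_def by auto
        from this show False by (rule short) (use ij in arith)
      next
        case False
        then have "odd (m - (j - i - 1))" using \<open>odd m\<close> ij by auto
        moreover have "m - (j - i - 1) > i" using ij by auto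
        ultimately have "badw E c (\<lambda>k. if k \<le> i then w k else w (k + (j - i - 1))) (m - (j - i - 1))"
          using w2 ij True unfolding badw_def by auto
        from this show False by (rule short) (use ij in arith)
      qed
    qed
    define xs where "xs = map w [0..<m]"
    have len: "length xs = m" and nth: "\<And>i. i < m \<Longrightarrow> xs ! i = w i" unfolding xs_def by auto
    have ic: "induced_cycle V E xs"
      unfolding induced_cycle_def
    proof (intro conjI allI impI)
      show "3 \<le> length xs" using len m3 by auto
      show "distinct xs" unfolding xs_def distinct_map
        using dist by (auto simp: inj_on_def) (metis linorder_neqE_nat)
      show "set xs \<subseteq> V" unfolding xs_def using edge inV by auto meson
    next
      fix i assume "i < length xs"
      then have im: "i < m" using len by simp
      show "E (xs ! i) (xs ! ((i + 1) mod length xs))"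
      proof (cases "i + 1 < m")
        case True
        then show ?thesis using len nth edge im by simp
      next
        case False
        then have "i + 1 = m" using im by simp
        then have "(i + 1) mod length xs = 0" using len by simp
        moreover have "E (w i) (w m)" using edge[OF im] \<open>i + 1 = m\<close> by simp
        ultimately show ?thesis using nth im \<open>w 0 = w m \<and> odd m\<close> m3 by simp
      qed
    next
      fix a b assume ab: "a < length xs" "b < length xs" "E (xs ! a) (xs ! b)"
      then have E: "E (w a) (w b)" using len nth by auto
      then have "a \<noteq> b" using irr by auto
      show "b = (a + 1) mod length xs \<or> a = (b + 1) mod length xs"
      proof (cases "a < b")
        case True
        have "b = a + 1 \<or> (a = 0 \<and> b = m - 1)" using chord[OF True _ E] ab len by simp
        then show ?thesis
        proof
          assume "b = a + 1" then show ?thesis using ab len by simp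
        next
          assume "a = 0 \<and> b = m - 1"
          then have "(b + 1) mod length xs = 0" "a = 0" using len m3 by simp_all
          then show ?thesis by simp
        qed
      next
        case False
        then have "b < a" using \<open>a \<noteq> b\<close> by auto
        have "a = b + 1 \<or> (b = 0 \<and> a = m - 1)" using chord[OF \<open>b < a\<close> _ sym[OF E]] ab len by simp
        then show ?thesis
        proof
          assume "a = b + 1" then show ?thesis using ab len by simp
        next
          assume "b = 0 \<and> a = m - 1"
          then have "(a + 1) mod length xs = 0" "b = 0" using len m3 by simp_all
          then show ?thesis by simp
        qed
      qed
    qed
    have oddl: "odd (length xs)" using len True by auto
    define S where "S = colored_vertices c xs"
    have one: "\<And>x y. x \<in> S \<Longrightarrow> y \<in> S \<Longrightarrow> x = y"
    proof -
      fix x y assume "x \<in> S" "y \<in> S"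
      then obtain a b where "a < m" "b < m" "x = w a" "y = w b" "c (w a) \<noteq> None" "c (w b) \<noteq> None"
        unfolding S_def colored_vertices_def xs_def by auto
      then show "x = y" using col by (metis linorder_neqE_nat)
    qed
    show ?thesis
    proof (cases "S = {}")
      case True then show ?thesis using ic oddl S_def by blast
    next
      case False
      then obtain x where "x \<in> S" by auto
      then have "S = {x}" using one by auto
      then show ?thesis using ic oddl S_def by auto
    qed
  next
    case False
    then have muw: "mu (w, m) = 2 * m + 1" unfolding mu_def by auto
    have cw: "c (w 0) \<noteq> None" "c (w m) \<noteq> None" "odd m \<longleftrightarrow> c (w 0) = c (w m)"
      using bw False unfolding badw_def by auto
    have short: "\<And>w' m'. badw E c w' m' \<Longrightarrow> m' < m \<Longrightarrow> False"
    proof -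
      fix w' m' assume "badw E c w' m'" "m' < m"
      then have "mu (w, m) \<le> mu (w', m')" using minim by blast
      moreover have "mu (w', m') \<le> 2 * m' + 1" unfolding mu_def by auto
      ultimately show False using muw \<open>m' < m\<close> by auto
    qed
    have shortc: "\<And>w' m'. badw E c w' m' \<Longrightarrow> w' 0 = w' m' \<Longrightarrow> odd m' \<Longrightarrow> m' \<le> m \<Longrightarrow> False"
    proof -
      fix w' m' assume "badw E c w' m'" "w' 0 = w' m'" "odd m'" "m' \<le> m"
      then have "mu (w, m) \<le> mu (w', m')" using minim by blast
      moreover have "mu (w', m') = 2 * m'" unfolding mu_def using \<open>w' 0 = w' m'\<close> \<open>odd m'\<close> by auto
      ultimately show False using muw \<open>m' \<le> m\<close> by auto
    qed
    have ne: "w 0 \<noteq> w m" using False cw by auto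
    then have m1: "m \<ge> 1" by (cases m) auto
    obtain a0 where a0: "c (w 0) = Some a0" using cw by auto
    obtain am where am: "c (w m) = Some am" using cw by auto
    have interior: "\<And>i. 0 < i \<Longrightarrow> i < m \<Longrightarrow> c (w i) = None"
    proof (rule ccontr)
      fix i assume i: "0 < i" "i < m" "c (w i) \<noteq> None"
      then obtain ai where ai: "c (w i) = Some ai" by auto
      have w1: "walkf E (\<lambda>k. w (0 + k)) (i - 0)" using walk_sub[OF wk, of i 0] i by auto
      have w2: "walkf E (\<lambda>k. w (i + k)) (m - i)" using walk_sub[OF wk, of m i] i by auto
      show False
      proof (cases "odd i \<longleftrightarrow> a0 = ai")
        case True
        then have "badw E c (\<lambda>k. w (0 + k)) (i - 0)" using w1 a0 ai unfolding badw_def by auto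
        from this show False by (rule short) (use i in arith)
      next
        case F: False
        have "odd (m - i) \<longleftrightarrow> ai = am"
        proof -
          have pm: "odd m \<longleftrightarrow> (odd i \<noteq> odd (m - i))" using i by auto
          have "odd m \<longleftrightarrow> a0 = am" using cw(3) a0 am by simp
          from bool3[OF pm F this] show ?thesis .
        qed
        then have "badw E c (\<lambda>k. w (i + k)) (m - i)" using w2 ai am i unfolding badw_def by auto
        from this show False by (rule short) (use i in arith)
      qed
    qed
    have dist: "\<And>i j. i < j \<Longrightarrow> j \<le> m \<Longrightarrow> w i \<noteq> w j"
    proof
      fix i j assume ij: "i < j" "j \<le> m" "w i = w j"
      then have "\<not> (i = 0 \<and> j = m)" using ne by auto
      then have lt: "j - i < m" using ij by auto
      have w1: "walkf E (\<lambda>k. w (i + k)) (j - i)" using walk_sub[OF wk, of j i] ij by auto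
      have w2: "walkf E (\<lambda>k. if k \<le> i then w k else w (k + (j - i))) (m - (j - i))"
        using walk_skip[OF wk, of i j] ij by auto
      have e2: "(\<lambda>k. if k \<le> i then w k else w (k + (j - i))) (m - (j - i)) = w m"
        using ij by (cases "j = m") auto
      show False
      proof (cases "odd (j - i)")
        case True
        then have "badw E c (\<lambda>k. w (i + k)) (j - i)" using w1 ij unfolding badw_def by auto
        from this show False by (rule short) (use lt in arith)
      next
        case F: False
        then have "odd (m - (j - i)) \<longleftrightarrow> odd m" using ij by auto
        then have "badw E c (\<lambda>k. if k \<le> i then w k else w (k + (j - i))) (m - (j - i))"
          using w2 e2 cw unfolding badw_def by auto
        from this show False by (rule short) (use ij in arith)
      qed
    qed
    have chord: "\<And>i j. i < j \<Longrightarrow> j \<le> m \<Longrightarrow> E (w i) (w j) \<Longrightarrow> j = i + 1 \<or> (i = 0 \<and> j = m)"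
    proof (rule ccontr)
      fix i j assume ij: "i < j" "j \<le> m" "E (w i) (w j)" "\<not> (j = i + 1 \<or> (i = 0 \<and> j = m))"
      have w1: "walkf E (\<lambda>k. if k \<le> j - i then w (i + k) else w i) (j - i + 1)"
        using walk_loop[OF wk, of i j] ij sym by auto
      have w2: "walkf E (\<lambda>k. if k \<le> i then w k else w (k + (j - i - 1))) (m - (j - i - 1))"
        using walk_shortcut[OF wk, of i j] ij by auto
      have e2: "(\<lambda>k. if k \<le> i then w k else w (k + (j - i - 1))) (m - (j - i - 1)) = w m"
        using ij by auto
      show False
      proof (cases "odd (j - i + 1)")
        case True
        then have "badw E c (\<lambda>k. if k \<le> j - i then w (i + k) else w i) (j - i + 1)"
          using w1 unfolding badw_def by auto
        moreover have "j - i + 1 \<le> m" using ij by arith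
        ultimately show False using shortc[of "\<lambda>k. if k \<le> j - i then w (i + k) else w i" "j - i + 1"] True by auto
      next
        case F: False
        then have "odd (m - (j - i - 1)) \<longleftrightarrow> odd m" using ij by auto
        then have "badw E c (\<lambda>k. if k \<le> i then w k else w (k + (j - i - 1))) (m - (j - i - 1))"
          using w2 e2 cw unfolding badw_def by auto
        from this show False by (rule short) (use ij in arith)
      qed
    qed
    define xs where "xs = map w [0..<Suc m]"
    have len: "length xs = Suc m" and nth: "\<And>i. i \<le> m \<Longrightarrow> xs ! i = w i" unfolding xs_def
      by (auto simp del: upt_Suc simp: nth_map_upt)
    have hdx: "hd xs = w 0" unfolding xs_def by (simp add: hd_map del: upt_Suc)
    have lastx: "last xs = w m" using nth[of m] len by (subst last_conv_nth) auto
    have distx: "distinct xs" unfolding xs_def distinct_map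
      using dist by (auto simp: inj_on_def simp del: upt_Suc) (metis linorder_neqE_nat less_Suc_eq_le)
    have wV: "\<And>k. k \<le> m \<Longrightarrow> w k \<in> V"
    proof -
      fix k assume k: "k \<le> m"
      show "w k \<in> V"
      proof (cases "k < m")
        case True then show ?thesis using inV[OF edge[OF True]] by simp
      next
        case False
        then have "k = m" using k by simp
        have "m - 1 < m" using m1 by arith
        then have "E (w (m - 1)) (w (Suc (m - 1)))" by (rule edge)
        then have "E (w (m - 1)) (w m)" using m1 by simp
        from inV[OF this] \<open>k = m\<close> show ?thesis by simp
      qed
    qed
    have setx: "set xs \<subseteq> V" unfolding xs_def using wV
      by (auto simp del: upt_Suc)
    have sx: "set xs = w ` {..m}" unfolding xs_def by (simp add: atLeast0LessThan lessThan_Suc_atMost del: upt_Suc)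
    have colx: "colored_vertices c xs = {hd xs, last xs}"
    proof (rule set_eqI)
      fix v
      show "v \<in> colored_vertices c xs \<longleftrightarrow> v \<in> {hd xs, last xs}"
      proof
        assume "v \<in> colored_vertices c xs"
        then obtain k where k: "k \<le> m" "v = w k" "c (w k) \<noteq> None"
          unfolding colored_vertices_def sx by auto
        have "\<not> (0 < k \<and> k < m)"
        proof
          assume h: "0 < k \<and> k < m"
          from interior[OF h[THEN conjunct1] h[THEN conjunct2]] k(3) show False by simp
        qed
        then have "k = 0 \<or> k = m" using k(1) by arith
        then show "v \<in> {hd xs, last xs}" using k(2) hdx lastx by auto
      next
        assume "v \<in> {hd xs, last xs}"
        then have "v = w 0 \<or> v = w m" using hdx lastx by auto
        then show "v \<in> colored_vertices c xs"
          unfolding colored_vertices_def sx using cw by auto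
      qed
    qed
    show ?thesis
    proof (cases "E (w 0) (w m)")
      case True
      then have "c (w 0) \<noteq> c (w m)" using prp cw by auto
      then have "even m" using cw by auto
      then have "m \<noteq> 1" by auto
      then have m2: "m \<ge> 2" using m1 by arith
      have ic: "induced_cycle V E xs"
        unfolding induced_cycle_def
      proof (intro conjI allI impI)
        show "3 \<le> length xs" using len m2 by auto
        show "distinct xs" by (rule distx)
        show "set xs \<subseteq> V" by (rule setx)
      next
        fix i assume "i < length xs"
        then have im: "i \<le> m" using len by simp
        show "E (xs ! i) (xs ! ((i + 1) mod length xs))"
        proof (cases "i < m")
          case True
          then show ?thesis using len nth edge im by simp
        next
          case False
          then have "i = m" using im by simp
          then have "(i + 1) mod length xs = 0" using len by simp
          moreover have "E (w i) (w 0)" using sym[OF True] \<open>i = m\<close> by simp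
          ultimately show ?thesis using nth im by simp
        qed
      next
        fix a b assume ab: "a < length xs" "b < length xs" "E (xs ! a) (xs ! b)"
        then have E: "E (w a) (w b)" using len nth by auto
        then have "a \<noteq> b" using irr by auto
        show "b = (a + 1) mod length xs \<or> a = (b + 1) mod length xs"
        proof (cases "a < b")
          case True
          have "b = a + 1 \<or> (a = 0 \<and> b = m)" using chord[OF True _ E] ab len by simp
          then show ?thesis
          proof
            assume "b = a + 1" then show ?thesis using ab len by simp
          next
            assume "a = 0 \<and> b = m"
            then have "(b + 1) mod length xs = 0" "a = 0" using len by simp_all
            then show ?thesis by simp
          qed
        next
          case False
          then have "b < a" using \<open>a \<noteq> b\<close> by auto
          have "a = b + 1 \<or> (b = 0 \<and> a = m)" using chord[OF \<open>b < a\<close> _ sym[OF E]] ab len by simp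
          then show ?thesis
          proof
            assume "a = b + 1" then show ?thesis using ab len by simp
          next
            assume "b = 0 \<and> a = m"
            then have "(a + 1) mod length xs = 0" "b = 0" using len by simp_all
            then show ?thesis by simp
          qed
        qed
      qed
      have "odd (length xs)" using len \<open>even m\<close> by auto
      moreover have "colored_vertices c xs = {xs ! m, xs ! ((m + 1) mod length xs)}"
        using colx hdx lastx nth len by auto
      ultimately have "induced_cycle V E xs \<and> odd (length xs) \<and> m < length xs
          \<and> colored_vertices c xs = {xs ! m, xs ! ((m + 1) mod length xs)}" using ic len by simp
      then have o5: "\<exists>xs i. induced_cycle V E xs \<and> odd (length xs) \<and> i < length xs
           \<and> colored_vertices c xs = {xs!i, xs!((i+1) mod length xs)}" by blast
      show ?thesis by (intro disjI2) (fact o5)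
    next
      case nE: False
      have ip: "induced_path V E xs"
        unfolding induced_path_def
      proof (intro conjI allI impI)
        show "xs \<noteq> []" using len by auto
        show "distinct xs" by (rule distx)
        show "set xs \<subseteq> V" by (rule setx)
      next
        fix i assume "i + 1 < length xs"
        then show "E (xs ! i) (xs ! (i + 1))" using len nth edge by auto
      next
        fix a b assume ab: "a < length xs" "b < length xs" "E (xs ! a) (xs ! b)"
        then have E: "E (w a) (w b)" using len nth by auto
        then have "a \<noteq> b" using irr by auto
        show "b = a + 1 \<or> a = b + 1"
        proof (cases "a < b")
          case True
          have "b = a + 1 \<or> (a = 0 \<and> b = m)" using chord[OF True _ E] ab len by simp
          then show ?thesis using nE E by auto
        next
          case False
          then have "b < a" using \<open>a \<noteq> b\<close> by auto
          have "a = b + 1 \<or> (b = 0 \<and> a = m)" using chord[OF \<open>b < a\<close> _ sym[OF E]] ab len by simp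
          moreover have "\<not> E (w m) (w 0)" using nE sym by blast
          ultimately show ?thesis using E by auto
        qed
      qed
      show ?thesis
      proof (cases "odd m")
        case True
        then have "induced_path V E xs \<and> odd (length xs - 1)
           \<and> colored_vertices c xs = {hd xs, last xs}
           \<and> c (hd xs) \<noteq> None \<and> c (last xs) \<noteq> None \<and> c (hd xs) = c (last xs)"
          using ip colx hdx lastx cw len by simp
        then have o2: "\<exists>xs. induced_path V E xs \<and> odd (length xs - 1)
           \<and> colored_vertices c xs = {hd xs, last xs}
           \<and> c (hd xs) \<noteq> None \<and> c (last xs) \<noteq> None \<and> c (hd xs) = c (last xs)" by blast
        show ?thesis by (rule disjI2, rule disjI1) (fact o2)
      next
        case F: False
        then have "induced_path V E xs \<and> even (length xs - 1)
           \<and> colored_vertices c xs = {hd xs, last xs}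
           \<and> c (hd xs) \<noteq> None \<and> c (last xs) \<noteq> None \<and> c (hd xs) \<noteq> c (last xs)"
          using ip colx hdx lastx cw len by simp
        then have o1: "\<exists>xs. induced_path V E xs \<and> even (length xs - 1)
           \<and> colored_vertices c xs = {hd xs, last xs}
           \<and> c (hd xs) \<noteq> None \<and> c (last xs) \<noteq> None \<and> c (hd xs) \<noteq> c (last xs)" by blast
        show ?thesis by (rule disjI1) (fact o1)
      qed
    qed
  qed
qed


theorem mainTheorem1:
  fixes V :: "'a set" and E :: "'a \<Rightarrow> 'a \<Rightarrow> bool" and c :: "'a \<Rightarrow> bool option"
  assumes "simple_graph V E" and "connected_graph V E" and "proper_partial_2col V E c"
  shows "extends_to_proper_2col V E c \<longleftrightarrow>
    (\<not> (\<exists>xs. induced_path V E xs \<and> even (length xs - 1)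
           \<and> colored_vertices c xs = {hd xs, last xs}
           \<and> c (hd xs) \<noteq> None \<and> c (last xs) \<noteq> None \<and> c (hd xs) \<noteq> c (last xs)))
  \<and> (\<not> (\<exists>xs. induced_path V E xs \<and> odd (length xs - 1)
           \<and> colored_vertices c xs = {hd xs, last xs}
           \<and> c (hd xs) \<noteq> None \<and> c (last xs) \<noteq> None \<and> c (hd xs) = c (last xs)))
  \<and> (\<not> (\<exists>xs. induced_cycle V E xs \<and> odd (length xs) \<and> colored_vertices c xs = {}))
  \<and> (\<not> (\<exists>xs. induced_cycle V E xs \<and> odd (length xs) \<and> card (colored_vertices c xs) = 1))
  \<and> (\<not> (\<exists>xs i. induced_cycle V E xs \<and> odd (length xs) \<and> i < length xs
           \<and> colored_vertices c xs = {xs!i, xs!((i+1) mod length xs)}))"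
  proof -
  have sg: "simple_graph V E" and cg: "connected_graph V E" and pp: "proper_partial_2col V E c" using assms by auto
  have sym: "\<And>x y. E x y \<Longrightarrow> E y x" and irr: "\<And>x. \<not> E x x"
    and inV: "\<And>x y. E x y \<Longrightarrow> x \<in> V \<and> y \<in> V"
    using sg unfolding simple_graph_def by blast+
  show ?thesis
  proof
    assume "extends_to_proper_2col V E c"
    then obtain f where fc: "\<And>v. v \<in> V \<Longrightarrow> c v \<noteq> None \<Longrightarrow> c v = Some (f v)"
      and fe: "\<And>u v. E u v \<Longrightarrow> f u \<noteq> f v"
      unfolding extends_to_proper_2col_def by blast
    have parw: "\<And>w. walkf E w m \<Longrightarrow> f (w m) = (f (w 0) \<noteq> odd m)" for m
    proof (induction m)
      case 0 then show ?case by simp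
    next
      case (Suc m)
      then have "walkf E w m" and e: "E (w m) (w (Suc m))" unfolding walkf_def by auto
      then have "f (w m) = (f (w 0) \<noteq> odd m)" using Suc.IH by blast
      moreover have "f (w (Suc m)) \<noteq> f (w m)" using fe[OF e] by auto
      ultimately show ?case by auto
    qed
    have pathpar: "\<And>xs. induced_path V E xs \<Longrightarrow>
        hd xs \<in> V \<and> last xs \<in> V \<and> f (last xs) = (f (hd xs) \<noteq> odd (length xs - 1))"
    proof -
      fix xs assume ip: "induced_path V E xs"
      then have ne: "xs \<noteq> []" and sv: "set xs \<subseteq> V"
        and ed: "\<And>i. i + 1 < length xs \<Longrightarrow> E (xs ! i) (xs ! (i + 1))"
        unfolding induced_path_def by auto
      have "walkf E (\<lambda>k. xs ! k) (length xs - 1)" unfolding walkf_def using ed by auto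
      from parw[OF this] have "f (xs ! (length xs - 1)) = (f (xs ! 0) \<noteq> odd (length xs - 1))" by simp
      moreover have "hd xs = xs ! 0" using ne by (simp add: hd_conv_nth)
      moreover have "last xs = xs ! (length xs - 1)" using ne by (simp add: last_conv_nth)
      moreover have "hd xs \<in> V" "last xs \<in> V" using ne sv by auto
      ultimately show "hd xs \<in> V \<and> last xs \<in> V \<and> f (last xs) = (f (hd xs) \<noteq> odd (length xs - 1))" by simp
    qed
    have nocyc: "\<And>xs. induced_cycle V E xs \<Longrightarrow> odd (length xs) \<Longrightarrow> False"
    proof -
      fix xs assume ic: "induced_cycle V E xs" and od: "odd (length xs)"
      define n where "n = length xs"
      have n3: "n \<ge> 3" and ed: "\<And>i. i < n \<Longrightarrow> E (xs ! i) (xs ! ((i + 1) mod n))"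
        using ic unfolding induced_cycle_def n_def by auto
      have "walkf E (\<lambda>k. xs ! (k mod n)) n" unfolding walkf_def
      proof (intro allI impI)
        fix i assume "i < n"
        then show "E (xs ! (i mod n)) (xs ! (Suc i mod n))" using ed[of i] by simp
      qed
      from parw[OF this] have "f (xs ! (n mod n)) = (f (xs ! (0 mod n)) \<noteq> odd n)" by simp
      then show False using od n_def by simp
    qed
    show "(\<not> (\<exists>xs. induced_path V E xs \<and> even (length xs - 1)
           \<and> colored_vertices c xs = {hd xs, last xs}
           \<and> c (hd xs) \<noteq> None \<and> c (last xs) \<noteq> None \<and> c (hd xs) \<noteq> c (last xs)))
  \<and> (\<not> (\<exists>xs. induced_path V E xs \<and> odd (length xs - 1)
           \<and> colored_vertices c xs = {hd xs, last xs}
           \<and> c (hd xs) \<noteq> None \<and> c (last xs) \<noteq> None \<and> c (hd xs) = c (last xs)))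
  \<and> (\<not> (\<exists>xs. induced_cycle V E xs \<and> odd (length xs) \<and> colored_vertices c xs = {}))
  \<and> (\<not> (\<exists>xs. induced_cycle V E xs \<and> odd (length xs) \<and> card (colored_vertices c xs) = 1))
  \<and> (\<not> (\<exists>xs i. induced_cycle V E xs \<and> odd (length xs) \<and> i < length xs
           \<and> colored_vertices c xs = {xs!i, xs!((i+1) mod length xs)}))"
    proof (intro conjI notI)
      assume "\<exists>xs. induced_path V E xs \<and> even (length xs - 1)
           \<and> colored_vertices c xs = {hd xs, last xs}
           \<and> c (hd xs) \<noteq> None \<and> c (last xs) \<noteq> None \<and> c (hd xs) \<noteq> c (last xs)"
      then obtain xs where ip: "induced_path V E xs" and ev: "even (length xs - 1)"
        and ch: "c (hd xs) \<noteq> None" and cl: "c (last xs) \<noteq> None" and df: "c (hd xs) \<noteq> c (last xs)"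
        by blast
      have pp': "hd xs \<in> V" "last xs \<in> V" "f (last xs) = (f (hd xs) \<noteq> odd (length xs - 1))"
        using pathpar[OF ip] by auto
      show False using fc[OF pp'(1) ch] fc[OF pp'(2) cl] pp'(3) ev df by simp
    next
      assume "\<exists>xs. induced_path V E xs \<and> odd (length xs - 1)
           \<and> colored_vertices c xs = {hd xs, last xs}
           \<and> c (hd xs) \<noteq> None \<and> c (last xs) \<noteq> None \<and> c (hd xs) = c (last xs)"
      then obtain xs where ip: "induced_path V E xs" and ev: "odd (length xs - 1)"
        and ch: "c (hd xs) \<noteq> None" and cl: "c (last xs) \<noteq> None" and df: "c (hd xs) = c (last xs)"
        by blast
      have pp': "hd xs \<in> V" "last xs \<in> V" "f (last xs) = (f (hd xs) \<noteq> odd (length xs - 1))"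
        using pathpar[OF ip] by auto
      show False using fc[OF pp'(1) ch] fc[OF pp'(2) cl] pp'(3) ev df by simp
    next
      assume "\<exists>xs. induced_cycle V E xs \<and> odd (length xs) \<and> colored_vertices c xs = {}"
      then show False using nocyc by blast
    next
      assume "\<exists>xs. induced_cycle V E xs \<and> odd (length xs) \<and> card (colored_vertices c xs) = 1"
      then show False using nocyc by blast
    next
      assume "\<exists>xs i. induced_cycle V E xs \<and> odd (length xs) \<and> i < length xs
           \<and> colored_vertices c xs = {xs!i, xs!((i+1) mod length xs)}"
      then show False using nocyc by blast
    qed
  next
    assume conds: "(\<not> (\<exists>xs. induced_path V E xs \<and> even (length xs - 1)
           \<and> colored_vertices c xs = {hd xs, last xs}
           \<and> c (hd xs) \<noteq> None \<and> c (last xs) \<noteq> None \<and> c (hd xs) \<noteq> c (last xs)))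
  \<and> (\<not> (\<exists>xs. induced_path V E xs \<and> odd (length xs - 1)
           \<and> colored_vertices c xs = {hd xs, last xs}
           \<and> c (hd xs) \<noteq> None \<and> c (last xs) \<noteq> None \<and> c (hd xs) = c (last xs)))
  \<and> (\<not> (\<exists>xs. induced_cycle V E xs \<and> odd (length xs) \<and> colored_vertices c xs = {}))
  \<and> (\<not> (\<exists>xs. induced_cycle V E xs \<and> odd (length xs) \<and> card (colored_vertices c xs) = 1))
  \<and> (\<not> (\<exists>xs i. induced_cycle V E xs \<and> odd (length xs) \<and> i < length xs
           \<and> colored_vertices c xs = {xs!i, xs!((i+1) mod length xs)}))"
    have nobad: "\<And>w m. \<not> badw E c w m"
    proof
      fix w m assume "badw E c w m"
      from obstruction[OF sg pp this] conds show False by argo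
    qed
    show "extends_to_proper_2col V E c"
    proof (cases "V = {}")
      case True
      then show ?thesis unfolding extends_to_proper_2col_def using inV by auto
    next
      case False
      define r where "r = (if \<exists>v\<in>V. c v \<noteq> None then SOME v. v \<in> V \<and> c v \<noteq> None else SOME v. v \<in> V)"
      have rV: "r \<in> V"
      proof (cases "\<exists>v\<in>V. c v \<noteq> None")
        case True
        then have "\<exists>v. v \<in> V \<and> c v \<noteq> None" by blast
        then have "(SOME v. v \<in> V \<and> c v \<noteq> None) \<in> V \<and> c (SOME v. v \<in> V \<and> c v \<noteq> None) \<noteq> None"
          by (rule someI_ex)
        then show ?thesis unfolding r_def using True by simp
      next
        case F: False
        have "\<exists>v. v \<in> V" using False by auto
        then have "(SOME v. v \<in> V) \<in> V" by (rule someI_ex)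
        then show ?thesis unfolding r_def using F by simp
      qed
      have rc: "\<And>v. v \<in> V \<Longrightarrow> c v \<noteq> None \<Longrightarrow> c r \<noteq> None"
      proof -
        fix v assume "v \<in> V" "c v \<noteq> None"
        then have "\<exists>v. v \<in> V \<and> c v \<noteq> None" by blast
        then have "(SOME v. v \<in> V \<and> c v \<noteq> None) \<in> V \<and> c (SOME v. v \<in> V \<and> c v \<noteq> None) \<noteq> None"
          by (rule someI_ex)
        then show "c r \<noteq> None" unfolding r_def using \<open>v \<in> V\<close> \<open>c v \<noteq> None\<close> by auto
      qed
      define b0 where "b0 = (case c r of Some b \<Rightarrow> b | None \<Rightarrow> True)"
      define par where "par v = (\<exists>w m. walkf E w m \<and> w 0 = r \<and> w m = v \<and> odd m)" for v
      define f where "f v = (if par v then \<not> b0 else b0)" for v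
      have reach: "\<And>v. v \<in> V \<Longrightarrow> \<exists>w m. walkf E w m \<and> w 0 = r \<and> w m = v"
      proof -
        fix v assume "v \<in> V"
        then have "E\<^sup>*\<^sup>* r v" using cg rV unfolding connected_graph_def by simp
        from rtranclp_walk[OF this] show "\<exists>w m. walkf E w m \<and> w 0 = r \<and> w m = v" .
      qed
      have uniq: "\<And>w m. walkf E w m \<Longrightarrow> w 0 = r \<Longrightarrow> par (w m) \<longleftrightarrow> odd m"
      proof -
        fix w m assume wk: "walkf E w m" and w0: "w 0 = r"
        show "par (w m) \<longleftrightarrow> odd m"
        proof
          assume "par (w m)"
          then obtain q b where q: "walkf E q b" "q 0 = r" "q b = w m" "odd b" unfolding par_def by blast
          have j: "walkf E (\<lambda>k. if k \<le> m then w k else q (m + b - k)) (m + b)"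
            using walk_join[OF wk q(1) q(3)[symmetric] sym] by simp
          have e0: "(\<lambda>k. if k \<le> m then w k else q (m + b - k)) (m + b) = r"
            using q w0 by (cases "b = 0") auto
          show "odd m"
          proof (rule ccontr)
            assume "\<not> odd m"
            then have "odd (m + b)" using q(4) by simp
            then have "badw E c (\<lambda>k. if k \<le> m then w k else q (m + b - k)) (m + b)"
              unfolding badw_def using j e0 w0 by simp
            then show False using nobad by blast
          qed
        next
          assume "odd m" then show "par (w m)" unfolding par_def using wk w0 by blast
        qed
      qed
      show ?thesis unfolding extends_to_proper_2col_def
      proof (intro exI conjI allI impI ballI)
        fix u v assume e: "E u v"
        then have "u \<in> V" using inV by blast
        then obtain w m where wk: "walkf E w m" "w 0 = r" "w m = u" using reach by blast
        have wk2: "walkf E (\<lambda>k. if k \<le> m then w k else v) (Suc m)"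
          using walk_extend[of E w m v] wk e by simp
        have "par u \<longleftrightarrow> odd m" using uniq[OF wk(1) wk(2)] wk(3) by simp
        moreover have "par v \<longleftrightarrow> odd (Suc m)" using uniq[OF wk2] wk(2) by simp
        ultimately show "f u \<noteq> f v" unfolding f_def by auto
      next
        fix v assume vV: "v \<in> V" and cv: "c v \<noteq> None"
        then obtain b where b: "c v = Some b" by auto
        have "c r \<noteq> None" using rc[OF vV cv] .
        then have cr: "c r = Some b0" unfolding b0_def by auto
        obtain w m where wk: "walkf E w m" "w 0 = r" "w m = v" using reach[OF vV] by blast
        have "\<not> badw E c w m" using nobad by blast
        then have "odd m \<longleftrightarrow> c r \<noteq> c v" unfolding badw_def using wk cr b by auto
        moreover have "par v \<longleftrightarrow> odd m" using uniq[OF wk(1) wk(2)] wk(3) by simp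
        ultimately show "c v = Some (f v)" unfolding f_def using cr b by auto
      qed
    qed
  qed
qed

end
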